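(* Let $G=K_{n_1}\times\cdots\times K_{n_d}$, where each $n_j\geq 2$ is even. Then for every vertex $u$ of $G$, $\uparrow^{2}G$ has Laplacian perfect state transfer between $(0,u)$ and $(1,u)$.
   Context: All graphs are simple, undirected and unweighted. $K_n$ is the complete graph on $n$ vertices. The direct product $G\times H$ is the graph with adjacency matrix $A(G)\otimes A(H)$. The blow-up $\uparrow^{2}G$ has vertex set $\mathbb{Z}_2\times V(G)$, with $(l,u)\sim(m,v)$ iff $u\sim v$ in $G$. A graph with Laplacian $L=D-A$ has Laplacian perfect state transfer between $a,b$ if $\exp(i\tau L)\mathbf{e}_a=\gamma\mathbf{e}_b$ for some $\tau>0$, $\gamma\in\mathbb{C}$. *)

theory Defs
  imports Complex_Main
begin

text \<open>A finite graph is given by a vertex set V and a symmetric adjacency relation adj.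
Matrices indexed by V are functions V \<Rightarrow> V \<Rightarrow> complex.\<close>

definition laplacian :: "'v set \<Rightarrow> ('v \<Rightarrow> 'v \<Rightarrow> bool) \<Rightarrow> 'v \<Rightarrow> 'v \<Rightarrow> complex" where
  "laplacian V adj u v =
     (if u = v then of_nat (card {w\<in>V. adj u w}) else 0) - (if adj u v then 1 else 0)"

definition mat_vec :: "'v set \<Rightarrow> ('v \<Rightarrow> 'v \<Rightarrow> complex) \<Rightarrow> ('v \<Rightarrow> complex) \<Rightarrow> ('v \<Rightarrow> complex)" where
  "mat_vec V M x = (\<lambda>u. \<Sum>v\<in>V. M u v * x v)"

definition unit_vec :: "'v \<Rightarrow> 'v \<Rightarrow> complex" where
  "unit_vec a = (\<lambda>v. if v = a then 1 else 0)"

text \<open>Laplacian perfect state transfer: exp(i tau L) e_a = gamma e_b, where the matrix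
exponential applied to e_a is given entrywise by its defining power series.\<close>
definition laplacian_pst :: "'v set \<Rightarrow> ('v \<Rightarrow> 'v \<Rightarrow> bool) \<Rightarrow> 'v \<Rightarrow> 'v \<Rightarrow> bool" where
  "laplacian_pst V adj a b \<longleftrightarrow>
     (\<exists>\<tau>::real. \<tau> > 0 \<and> (\<exists>\<gamma>::complex. \<forall>w\<in>V.
        (\<lambda>k. (\<i> * complex_of_real \<tau>) ^ k / fact k
              * ((mat_vec V (laplacian V adj)) ^^ k) (unit_vec a) w)
        sums (\<gamma> * unit_vec b w)))"

text \<open>Direct product K_{n_1} x ... x K_{n_d}: vertices are tuples (lists) x with
x!j < n_j; adjacency is entrywise adjacency in each complete graph.\<close>
definition prodK_verts :: "nat list \<Rightarrow> nat list set" where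
  "prodK_verts ns = {xs. length xs = length ns \<and> (\<forall>j<length ns. xs ! j < ns ! j)}"

definition prodK_adj :: "nat list \<Rightarrow> nat list \<Rightarrow> nat list \<Rightarrow> bool" where
  "prodK_adj ns xs ys \<longleftrightarrow> (\<forall>j<length ns. xs ! j \<noteq> ys ! j)"

definition blowup2_verts :: "'v set \<Rightarrow> (nat \<times> 'v) set" where
  "blowup2_verts V = {0, 1} \<times> V"

definition blowup2_adj :: "('v \<Rightarrow> 'v \<Rightarrow> bool) \<Rightarrow> nat \<times> 'v \<Rightarrow> nat \<times> 'v \<Rightarrow> bool" where
  "blowup2_adj adj p q \<longleftrightarrow> adj (snd p) (snd q)"

end

theory Submission
  imports Defs "HOL-Analysis.Analysis"
begin

lemma odd_exp:
  fixes m :: int assumes "odd m"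
  shows "exp (\<i> * of_real pi * of_int m) = (-1::complex)"
proof -
  obtain q where q: "m = 2*q+1" using assms by (metis oddE)
  have "exp (\<i> * of_real pi * of_int m) = exp((2 * of_int q * pi) * \<i>) * exp (\<i> * of_real pi)"
    by (simp add: q exp_add[symmetric] algebra_simps)
  also have "exp((2 * of_int q * pi) * \<i>) = 1"
    by (rule exp_integer_2pi) simp
  finally show ?thesis by simp
qed

lemma prodK_verts_Cons:
  "prodK_verts (n # ns) = (\<lambda>(b,ys). b # ys) ` ({..<n} \<times> prodK_verts ns)"
proof (rule set_eqI)
  fix xs show "xs \<in> prodK_verts (n # ns) \<longleftrightarrow> xs \<in> (\<lambda>(b,ys). b # ys) ` ({..<n} \<times> prodK_verts ns)"
  proof
    assume h: "xs \<in> prodK_verts (n # ns)"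
    then obtain b ys where xs: "xs = b # ys" by (cases xs) (auto simp: prodK_verts_def)
    have "b < n" using h xs by (force simp: prodK_verts_def)
    moreover have "ys \<in> prodK_verts ns" using h xs by (force simp: prodK_verts_def)
    ultimately show "xs \<in> (\<lambda>(b,ys). b # ys) ` ({..<n} \<times> prodK_verts ns)" using xs by force
  next
    assume "xs \<in> (\<lambda>(b,ys). b # ys) ` ({..<n} \<times> prodK_verts ns)"
    then show "xs \<in> prodK_verts (n # ns)"
      by (auto simp: prodK_verts_def nth_Cons split: nat.splits)
  qed
qed

lemma finite_prodK: "finite (prodK_verts ns)"
  by (induction ns) (auto simp: prodK_verts_Cons, simp add: prodK_verts_def)

lemma factor_sum:
  "(\<Sum>y\<in>prodK_verts ns. \<Prod>j<length ns. (f j (y ! j) :: complex)) = (\<Prod>j<length ns. \<Sum>b<ns!j. f j b)"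
proof (induction ns arbitrary: f)
  case Nil
  have "prodK_verts [] = {[]}" by (auto simp: prodK_verts_def)
  then show ?case by simp
next
  case (Cons n ns)
  have inj: "inj_on (\<lambda>(b,ys). b # ys) ({..<n} \<times> prodK_verts ns)" by (auto simp: inj_on_def)
  have "(\<Sum>y\<in>prodK_verts (n#ns). \<Prod>j<length (n#ns). f j (y ! j))
     = (\<Sum>(b,ys)\<in>{..<n} \<times> prodK_verts ns. f 0 b * (\<Prod>j<length ns. f (Suc j) (ys ! j)))"
    unfolding prodK_verts_Cons
    by (subst sum.reindex[OF inj]) (simp add: case_prod_unfold prod.lessThan_Suc_shift del: prod.lessThan_Suc)
  also have "\<dots> = (\<Sum>b<n. f 0 b * (\<Sum>ys\<in>prodK_verts ns. \<Prod>j<length ns. f (Suc j) (ys ! j)))"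
    by (simp add: sum.cartesian_product[symmetric] sum_distrib_left)
  also have "\<dots> = (\<Sum>b<n. f 0 b) * (\<Prod>j<length ns. \<Sum>b<ns!j. f (Suc j) b)"
    using Cons.IH[of "\<lambda>j. f (Suc j)"] by (simp add: sum_distrib_right)
  also have "\<dots> = (\<Prod>j<length (n#ns). \<Sum>b<(n#ns)!j. f j b)"
    by (simp add: prod.lessThan_Suc_shift del: prod.lessThan_Suc)
  finally show ?case .
qed


lemma power_decomp:
  fixes L :: "'v \<Rightarrow> 'v \<Rightarrow> complex"
  assumes eig0: "\<forall>w\<in>V. mat_vec V L chi w = m0 * chi w"
  and eig: "\<forall>i\<in>I. \<forall>w\<in>V. mat_vec V L (psi i) w = m i * psi i w"
  and x: "\<forall>w\<in>V. x w = chi w + (\<Sum>i\<in>I. psi i w)"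
  shows "\<forall>w\<in>V. ((mat_vec V L)^^k) x w = m0^k * chi w + (\<Sum>i\<in>I. m i ^ k * psi i w)"
proof (induction k)
  case 0
  then show ?case using x by simp
next
  case (Suc k)
  show ?case
  proof
    fix w assume w: "w \<in> V"
    have "((mat_vec V L)^^Suc k) x w = (\<Sum>v\<in>V. L w v * ((mat_vec V L ^^ k) x v))"
      by (simp add: mat_vec_def)
    also have "\<dots> = (\<Sum>v\<in>V. L w v * (m0^k * chi v + (\<Sum>i\<in>I. m i ^ k * psi i v)))"
      using Suc.IH by (intro sum.cong) auto
    also have "\<dots> = m0^k * (\<Sum>v\<in>V. L w v * chi v) + (\<Sum>i\<in>I. m i ^ k * (\<Sum>v\<in>V. L w v * psi i v))"
      by (simp add: algebra_simps sum.distrib sum_distrib_left sum_distrib_right sum.swap[of _ I])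
    also have "\<dots> = m0^Suc k * chi w + (\<Sum>i\<in>I. m i ^ Suc k * psi i w)"
      using eig0 eig w unfolding mat_vec_def by (auto intro!: sum.cong)
    finally show "((mat_vec V L)^^Suc k) x w = m0^Suc k * chi w + (\<Sum>i\<in>I. m i ^ Suc k * psi i w)" .
  qed
qed

lemma exp_sums_c: "(\<lambda>k. (z::complex)^k / fact k) sums exp z"
  using exp_converges[of z] by (simp add: scaleR_conv_of_real divide_inverse mult.commute)

lemma series_decomp:
  fixes c m0 a :: complex
  assumes "finite I"
  shows "(\<lambda>k. c^k / fact k * (m0^k * a + (\<Sum>i\<in>I. m i ^ k * b i)))
     sums (exp (c*m0) * a + (\<Sum>i\<in>I. exp (c * m i) * b i))"
proof -
  have e: "(\<lambda>k. c^k / fact k * (m0^k * a + (\<Sum>i\<in>I. m i ^ k * b i)))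
     = (\<lambda>k. (c*m0)^k / fact k * a + (\<Sum>i\<in>I. (c * m i)^k / fact k * b i))"
    by (simp add: algebra_simps sum_distrib_left power_mult_distrib)
  show ?thesis unfolding e
    by (intro sums_add sums_sum sums_mult2 exp_sums_c)
qed


definition gfun :: "nat list \<Rightarrow> nat list \<Rightarrow> nat set \<Rightarrow> nat \<Rightarrow> nat \<Rightarrow> complex" where
  "gfun ns u S j a = (if j \<in> S then (if a = u!j then 1 else 0) - 1 / of_nat (ns!j) else 1 / of_nat (ns!j))"

definition phi :: "nat list \<Rightarrow> nat list \<Rightarrow> nat set \<Rightarrow> nat list \<Rightarrow> complex" where
  "phi ns u S v = (\<Prod>j<length ns. gfun ns u S j (v!j))"

definition lam :: "nat list \<Rightarrow> nat set \<Rightarrow> complex" where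
  "lam ns S = (\<Prod>j<length ns. (if j \<in> S then -1 else of_nat (ns!j) - 1))"

definition Kc :: "nat list \<Rightarrow> complex" where
  "Kc ns = (\<Prod>j<length ns. of_nat (ns!j) - 1)"

lemma sum_minus_one:
  fixes h :: "nat \<Rightarrow> complex"
  assumes "a < n"
  shows "(\<Sum>b<n. (if a \<noteq> b then 1 else 0) * h b) = (\<Sum>b<n. h b) - h a"
proof -
  have "(\<Sum>b<n. h b) = h a + (\<Sum>b\<in>{..<n}-{a}. h b)" using assms by (simp add: sum.remove)
  moreover have "(\<Sum>b<n. (if a \<noteq> b then 1 else 0) * h b) = 0 + (\<Sum>b\<in>{..<n}-{a}. (if a \<noteq> b then 1 else 0) * h b)"
    using assms by (simp add: sum.remove)
  moreover have "(\<Sum>b\<in>{..<n}-{a}. (if a \<noteq> b then 1 else 0) * h b) = (\<Sum>b\<in>{..<n}-{a}. h b)"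
    by (intro sum.cong) auto
  ultimately show ?thesis by simp
qed

lemma local_eig:
  assumes "0 < ns!j" "u!j < ns!j" "a < ns!j"
  shows "(\<Sum>b<ns!j. (if a \<noteq> b then 1 else 0) * gfun ns u S j b)
       = (if j \<in> S then -1 else of_nat (ns!j) - 1) * gfun ns u S j a"
proof -
  have s1: "(\<Sum>b<ns!j. (if b = u!j then 1 else 0 :: complex)) = 1"
    using assms by (simp add: sum.delta)
  have n0: "(of_nat (ns!j) :: complex) \<noteq> 0" using assms by simp
  have sg: "(\<Sum>b<ns!j. gfun ns u S j b) = (if j \<in> S then 0 else 1)"
    using s1 n0 by (simp add: gfun_def sum_subtractf)
  show ?thesis unfolding sum_minus_one[OF assms(3)] sg
    using n0 by (simp add: gfun_def field_simps)
qed

lemma adj_ind: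
  "(if prodK_adj ns v y then 1 else 0 :: complex) = (\<Prod>j<length ns. (if v!j \<noteq> y!j then 1 else 0))"
  unfolding prodK_adj_def by (auto simp: prod_zero_iff)

lemma A_eig:
  assumes pos: "\<forall>n\<in>set ns. 0 < n" and u: "u \<in> prodK_verts ns" and v: "v \<in> prodK_verts ns"
  shows "(\<Sum>y\<in>prodK_verts ns. (if prodK_adj ns v y then 1 else 0) * phi ns u S y) = lam ns S * phi ns u S v"
proof -
  have "(\<Sum>y\<in>prodK_verts ns. (if prodK_adj ns v y then 1 else 0) * phi ns u S y)
    = (\<Sum>y\<in>prodK_verts ns. \<Prod>j<length ns. (if v!j \<noteq> y!j then 1 else 0) * gfun ns u S j (y!j))"
    unfolding adj_ind phi_def by (simp add: prod.distrib)
  also have "\<dots> = (\<Prod>j<length ns. \<Sum>b<ns!j. (if v!j \<noteq> b then 1 else 0) * gfun ns u S j b)"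
    by (rule factor_sum)
  also have "\<dots> = (\<Prod>j<length ns. (if j \<in> S then -1 else of_nat (ns!j) - 1) * gfun ns u S j (v!j))"
    using pos u v by (intro prod.cong refl local_eig) (auto simp: prodK_verts_def)
  also have "\<dots> = lam ns S * phi ns u S v"
    by (simp add: prod.distrib lam_def phi_def)
  finally show ?thesis .
qed

lemma deg:
  assumes v: "v \<in> prodK_verts ns"
  shows "of_nat (card {y\<in>prodK_verts ns. prodK_adj ns v y}) = Kc ns"
proof -
  have "of_nat (card {y\<in>prodK_verts ns. prodK_adj ns v y}) = (\<Sum>y\<in>prodK_verts ns. (if prodK_adj ns v y then 1 else 0 :: complex))"
    using finite_prodK[of ns] by (simp add: sum.If_cases Int_def)
  also have "\<dots> = (\<Sum>y\<in>prodK_verts ns. \<Prod>j<length ns. (if v!j \<noteq> y!j then 1 else 0) * (1::complex))"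
    unfolding adj_ind by simp
  also have "\<dots> = (\<Prod>j<length ns. \<Sum>b<ns!j. (if v!j \<noteq> b then 1 else 0) * (1::complex))"
    by (rule factor_sum)
  also have "\<dots> = Kc ns"
    unfolding Kc_def using v sum_minus_one[of _ _ "\<lambda>_. 1"]
    by (intro prod.cong refl) (auto simp: prodK_verts_def)
  finally show ?thesis .
qed


lemma mat_vec_blow:
  assumes v: "v \<in> prodK_verts ns" and l: "l \<in> {0,1}"
  shows "mat_vec (blowup2_verts (prodK_verts ns)) (laplacian (blowup2_verts (prodK_verts ns)) (blowup2_adj (prodK_adj ns))) x (l,v)
    = 2 * Kc ns * x (l,v) - (\<Sum>y\<in>prodK_verts ns. (if prodK_adj ns v y then 1 else 0) * (x (0,y) + x (1,y)))"
proof -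
  let ?V = "prodK_verts ns"
  let ?B = "blowup2_verts ?V"
  have fin: "finite ?B" using finite_prodK by (simp add: blowup2_verts_def)
  have cs: "{w \<in> ?B. prodK_adj ns v (snd w)} = {0::nat,1} \<times> {y\<in>?V. prodK_adj ns v y}"
    by (auto simp: blowup2_verts_def)
  have dB: "of_nat (card {w \<in> ?B. blowup2_adj (prodK_adj ns) (l,v) w}) = 2 * Kc ns"
    unfolding blowup2_adj_def using cs deg[OF v] by (simp add: card_cartesian_product)
  have lv: "(l,v) \<in> ?B" using v l by (auto simp: blowup2_verts_def)
  have "mat_vec ?B (laplacian ?B (blowup2_adj (prodK_adj ns))) x (l,v)
      = (\<Sum>w\<in>?B. (if (l,v) = w then 2 * Kc ns * x w else 0)) - (\<Sum>w\<in>?B. (if prodK_adj ns v (snd w) then 1 else 0) * x w)"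
    unfolding mat_vec_def sum_subtractf[symmetric]
  proof (intro sum.cong refl)
    fix w assume "w \<in> ?B"
    show "laplacian ?B (blowup2_adj (prodK_adj ns)) (l, v) w * x w =
         (if (l, v) = w then 2 * Kc ns * x w else 0) - (if prodK_adj ns v (snd w) then 1 else 0) * x w"
      using dB by (cases "(l,v) = w") (auto simp: laplacian_def blowup2_adj_def left_diff_distrib)
  qed
  also have "(\<Sum>w\<in>?B. (if (l,v) = w then 2 * Kc ns * x w else 0)) = 2 * Kc ns * x (l,v)"
    using fin lv by (simp add: sum.delta)
  also have "(\<Sum>w\<in>?B. (if prodK_adj ns v (snd w) then 1 else 0) * x w)
     = (\<Sum>m\<in>{0::nat,1}. \<Sum>y\<in>?V. (if prodK_adj ns v y then 1 else 0) * x (m,y))"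
    unfolding blowup2_verts_def sum.cartesian_product by (intro sum.cong refl) auto
  also have "\<dots> = (\<Sum>y\<in>?V. (if prodK_adj ns v y then 1 else 0) * (x (0,y) + x (1,y)))"
    by (simp add: sum.distrib distrib_left)
  finally show ?thesis .
qed

lemma phi_sum:
  assumes u: "u \<in> prodK_verts ns" and v: "v \<in> prodK_verts ns"
  shows "(\<Sum>S\<in>Pow {..<length ns}. phi ns u S v) = unit_vec u v"
proof -
  let ?E1 = "\<lambda>j. (if v!j = u!j then 1 else 0) - 1 / of_nat (ns!j) :: complex"
  let ?E0 = "\<lambda>j. 1 / of_nat (ns!j) :: complex"
  have "phi ns u S v = (\<Prod>j\<in>S. ?E1 j) * (\<Prod>j\<in>{..<length ns} - S. ?E0 j)" if S: "S \<subseteq> {..<length ns}" for S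
  proof -
    have "phi ns u S v = (\<Prod>j\<in>{..<length ns} - S. gfun ns u S j (v!j)) * (\<Prod>j\<in>S. gfun ns u S j (v!j))"
      unfolding phi_def using S by (simp add: prod.subset_diff)
    also have "\<dots> = (\<Prod>j\<in>{..<length ns} - S. ?E0 j) * (\<Prod>j\<in>S. ?E1 j)"
      by (intro arg_cong2[where f="(*)"] prod.cong) (auto simp: gfun_def)
    finally show ?thesis by simp
  qed
  then have "(\<Sum>S\<in>Pow {..<length ns}. phi ns u S v) = (\<Sum>S\<in>Pow {..<length ns}. (\<Prod>j\<in>S. ?E1 j) * (\<Prod>j\<in>{..<length ns} - S. ?E0 j))"
    by (intro sum.cong) auto
  also have "\<dots> = (\<Prod>j<length ns. ?E1 j + ?E0 j)"
    by (rule prod_add[symmetric]) simp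
  also have "\<dots> = (\<Prod>j<length ns. (if v!j = u!j then 1 else 0))"
    by simp
  also have "\<dots> = unit_vec u v"
    using u v by (auto simp: unit_vec_def prod_zero_iff prodK_verts_def list_eq_iff_nth_eq)
  finally show ?thesis .
qed


lemma lam_odd:
  assumes "\<forall>n\<in>set ns. n \<ge> 2 \<and> even n"
  shows "\<exists>m. odd m \<and> lam ns S = of_int m"
proof -
  define m where "m = (\<Prod>j<length ns. (if j \<in> S then -1 else int (ns!j) - 1))"
  have "lam ns S = of_int m" unfolding m_def lam_def of_int_prod by (intro prod.cong) auto
  moreover have "odd m"
  proof -
    have "odd (if j \<in> S then -1 else int (ns!j) - 1)" if j: "j < length ns" for j
    proof -
      have "ns!j \<in> set ns" using j by simp
      then have "even (ns!j)" "ns!j \<ge> 2" using assms by auto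
      then show ?thesis by auto
    qed
    then show ?thesis unfolding m_def by (simp add: even_prod_iff)
  qed
  ultimately show ?thesis by blast
qed

theorem corollary7:
  fixes ns :: "nat list" and u :: "nat list"
  assumes "ns \<noteq> []"
    and "\<forall>n\<in>set ns. n \<ge> 2 \<and> even n"
    and "u \<in> prodK_verts ns"
  shows "laplacian_pst (blowup2_verts (prodK_verts ns)) (blowup2_adj (prodK_adj ns)) (0, u) (1, u)"
proof -
  let ?V = "prodK_verts ns"
  let ?B = "blowup2_verts ?V"
  let ?L = "laplacian ?B (blowup2_adj (prodK_adj ns))"
  let ?I = "Pow {..<length ns}"
  define K where "K = Kc ns"
  define c where "c = \<i> * complex_of_real (pi/2)"
  define chi where "chi = (\<lambda>(l::nat,v). (if l = 0 then 1/2 else -1/2) * unit_vec u v)"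
  define Psi where "Psi = (\<lambda>S (l::nat, v::nat list). phi ns u S v / 2)"
  have pos: "\<forall>n\<in>set ns. 0 < n" using assms(2) by force
  have u: "u \<in> ?V" by fact
  have eig0: "\<forall>w\<in>?B. mat_vec ?B ?L chi w = (2*K) * chi w"
  proof
    fix w assume "w \<in> ?B"
    then obtain l v where w: "w = (l,v)" "l \<in> {0,1}" "v \<in> ?V" by (auto simp: blowup2_verts_def)
    show "mat_vec ?B ?L chi w = (2*K) * chi w"
      unfolding w(1) mat_vec_blow[OF w(3) w(2)] by (simp add: chi_def K_def)
  qed
  have eig: "\<forall>S\<in>?I. \<forall>w\<in>?B. mat_vec ?B ?L (Psi S) w = (2*K - 2 * lam ns S) * Psi S w"
  proof (intro ballI)
    fix S w assume "w \<in> ?B"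
    then obtain l v where w: "w = (l,v)" "l \<in> {0,1}" "v \<in> ?V" by (auto simp: blowup2_verts_def)
    have "mat_vec ?B ?L (Psi S) w = 2 * K * (phi ns u S v / 2) - (\<Sum>y\<in>?V. (if prodK_adj ns v y then 1 else 0) * phi ns u S y)"
      unfolding w(1) mat_vec_blow[OF w(3) w(2)] by (simp add: Psi_def K_def)
    also have "\<dots> = (2*K - 2 * lam ns S) * Psi S w"
      unfolding A_eig[OF pos u w(3)] by (simp add: Psi_def w(1) algebra_simps)
    finally show "mat_vec ?B ?L (Psi S) w = (2*K - 2 * lam ns S) * Psi S w" .
  qed
  have dec: "\<forall>w\<in>?B. unit_vec (0,u) w = chi w + (\<Sum>S\<in>?I. Psi S w)"
  proof
    fix w assume "w \<in> ?B"
    then obtain l v where w: "w = (l,v)" "l \<in> {0,1}" "v \<in> ?V" by (auto simp: blowup2_verts_def)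
    have h: "(\<Sum>S\<in>?I. Psi S (l,v)) = unit_vec u v / 2"
      unfolding Psi_def using phi_sum[OF u w(3)] by (simp add: sum_divide_distrib[symmetric])
    show "unit_vec (0,u) w = chi w + (\<Sum>S\<in>?I. Psi S w)"
      unfolding w(1) h using w(2) by (auto simp: chi_def unit_vec_def)
  qed
  have pw: "\<forall>w\<in>?B. ((mat_vec ?B ?L)^^k) (unit_vec (0,u)) w
      = (2*K)^k * chi w + (\<Sum>S\<in>?I. (2*K - 2 * lam ns S) ^ k * Psi S w)" for k
    by (rule power_decomp[OF eig0 eig dec])
  have ex: "exp (c * (2*K - 2 * lam ns S)) = - exp (c * (2*K))" for S
  proof -
    obtain m where m: "odd m" "lam ns S = of_int m" using lam_odd[OF assms(2)] by blast
    have eq: "c * (2*K - 2 * lam ns S) = c * (2*K) + \<i> * of_real pi * of_int (-m)"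
      unfolding c_def m(2) by (simp add: algebra_simps)
    have e1: "exp (\<i> * of_real pi * of_int (-m)) = (-1::complex)"
      using odd_exp[of "-m"] m(1) by simp
    show ?thesis unfolding eq exp_add e1 by simp
  qed
  show ?thesis
    unfolding laplacian_pst_def
  proof (intro exI conjI ballI)
    show "(0::real) < pi/2" by simp
    fix w assume w: "w \<in> ?B"
    have "(\<lambda>k. (\<i> * complex_of_real (pi/2)) ^ k / fact k * ((mat_vec ?B ?L)^^k) (unit_vec (0,u)) w)
      = (\<lambda>k. c^k / fact k * ((2*K)^k * chi w + (\<Sum>S\<in>?I. (2*K - 2 * lam ns S) ^ k * Psi S w)))"
      unfolding c_def[symmetric] using pw w by simp
    moreover have "(\<lambda>k. c^k / fact k * ((2*K)^k * chi w + (\<Sum>S\<in>?I. (2*K - 2 * lam ns S) ^ k * Psi S w)))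
      sums (exp (c*(2*K)) * chi w + (\<Sum>S\<in>?I. exp (c * (2*K - 2 * lam ns S)) * Psi S w))"
      by (rule series_decomp) simp
    moreover have "exp (c*(2*K)) * chi w + (\<Sum>S\<in>?I. exp (c * (2*K - 2 * lam ns S)) * Psi S w)
       = (- exp (c*(2*K))) * unit_vec (1,u) w"
    proof -
      obtain l v where wv: "w = (l,v)" "l \<in> {0,1}" "v \<in> ?V" using w by (auto simp: blowup2_verts_def)
      have "(\<Sum>S\<in>?I. Psi S w) = unit_vec u v / 2"
        unfolding Psi_def wv(1) using phi_sum[OF u wv(3)] by (simp add: sum_divide_distrib[symmetric])
      moreover have "(\<Sum>S\<in>?I. exp (c * (2*K - 2 * lam ns S)) * Psi S w)
          = - exp (c*(2*K)) * (\<Sum>S\<in>?I. Psi S w)"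
        unfolding ex by (simp add: sum_distrib_left)
      ultimately have "exp (c*(2*K)) * chi w + (\<Sum>S\<in>?I. exp (c * (2*K - 2 * lam ns S)) * Psi S w)
          = exp (c*(2*K)) * (chi w - unit_vec u v / 2)"
        by (simp add: algebra_simps)
      also have "\<dots> = (- exp (c*(2*K))) * unit_vec (1,u) w"
        using wv by (auto simp: chi_def unit_vec_def)
      finally show ?thesis .
    qed
    ultimately show "(\<lambda>k. (\<i> * complex_of_real (pi/2)) ^ k / fact k * ((mat_vec ?B ?L)^^k) (unit_vec (0,u)) w)
      sums ((- exp (c*(2*K))) * unit_vec (1,u) w)" by simp
  qed
qed

end
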